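(* For every nonnegative integer $n$, \[\sum_{r=0}^n\mathcal{K}_{n;r}(z;q)\Phi_r(1;z;q)=\Phi_n(1;z;q)\qquad\text{and}\qquad\sum_{r=0}^n\mathcal{K}_{n;r}(z/q;q)\Phi_r(u;z;q)=\Phi_n(uz;z;q).\]
   Context: $(a;q)_n=\prod_{j=0}^{n-1}(1-aq^j)$ for $n\ge0$ and $1/(q;q)_n=0$ for $n<0$; $(a,b;q)_n=(a;q)_n(b;q)_n$. For $n,r\in\mathbb{Z}$: \[\Phi_n(u;z;q):=\frac{1-uz-(1-u)zq^n}{(q;q)_n(z;q)_{n+1}},\qquad \mathcal{K}_{n;r}(z;q):=\frac{z^rq^{r^2}}{(q;q)_{n-r}}.\] (Note $\Phi_n(1;z;q)=1/(q,zq;q)_n$.) *)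

theory Defs
  imports "HOL-Analysis.Analysis"
begin

definition qpoch :: "complex \<Rightarrow> complex \<Rightarrow> nat \<Rightarrow> complex" where
  "qpoch a q n = (\<Prod>j<n. 1 - a * q ^ j)"

definition inv_qfact :: "complex \<Rightarrow> int \<Rightarrow> complex" where
  "inv_qfact q m = (if m < 0 then 0 else 1 / qpoch q q (nat m))"

definition Phi :: "nat \<Rightarrow> complex \<Rightarrow> complex \<Rightarrow> complex \<Rightarrow> complex" where
  "Phi n u z q = (1 - u * z - (1 - u) * z * q ^ n) / (qpoch q q n * qpoch z q (n + 1))"

definition Kc :: "nat \<Rightarrow> nat \<Rightarrow> complex \<Rightarrow> complex \<Rightarrow> complex" where
  "Kc n r z q = z ^ r * q ^ (r ^ 2) * inv_qfact q (int n - int r)"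

end

theory Submission
  imports Defs
begin

lemma qpoch_0[simp]: "qpoch a q 0 = 1" by (simp add: qpoch_def)
lemma qpoch_Suc: "qpoch a q (Suc m) = qpoch a q m * (1 - a*q^m)" by (simp add: qpoch_def)
lemma qpoch_add: "qpoch a q (m+k) = qpoch a q m * qpoch (a*q^m) q k"
  by (induction k) (simp_all add: qpoch_Suc power_add mult_ac)

fun qbin :: "complex \<Rightarrow> nat \<Rightarrow> nat \<Rightarrow> complex" where
  "qbin q 0 k = (if k = 0 then 1 else 0)"
| "qbin q (Suc n) 0 = 1"
| "qbin q (Suc n) (Suc k) = qbin q n (Suc k) + q^(n-k) * qbin q n k"

lemma qbin_gt: "n < k \<Longrightarrow> qbin q n k = 0"
proof (induction n arbitrary: k)
  case 0 then show ?case by simp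
next
  case (Suc n)
  then obtain k' where "k = Suc k'" "n < k'" by (cases k) auto
  then show ?case using Suc.IH[of k'] Suc.IH[of "Suc k'"] by simp
qed

lemma qbin_n0[simp]: "qbin q n 0 = 1" by (cases n) auto

lemma qbin_nn[simp]: "qbin q n n = 1"
  by (induction n) (simp_all add: qbin_gt)

lemma qbin_fact: "k \<le> n \<Longrightarrow> qbin q n k * qpoch q q k * qpoch q q (n-k) = qpoch q q n"
proof (induction n arbitrary: k)
  case 0 then show ?case by simp
next
  case (Suc n)
  show ?case
  proof (cases k)
    case 0 then show ?thesis by simp
  next
    case (Suc k')
    show ?thesis
    proof (cases "k' = n")
      case True then show ?thesis using Suc by (simp add: qbin_gt)
    next
      case False
      then have lt: "k' < n" using Suc \<open>k \<le> Suc n\<close> by simp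
      have h1: "qbin q n (Suc k') * qpoch q q (Suc k') * qpoch q q (n - Suc k') = qpoch q q n"
        using Suc.IH[of "Suc k'"] lt by simp
      have h2: "qbin q n k' * qpoch q q k' * qpoch q q (n - k') = qpoch q q n"
        using Suc.IH[of k'] lt by simp
      have e: "n - k' = Suc (n - Suc k')" using lt by simp
      have r: "qbin q (Suc n) k = qbin q n (Suc k') + q^(n-k') * qbin q n k'" using Suc by simp
      have a: "qpoch q q (Suc n - k) = qpoch q q (n - Suc k') * (1 - q*q^(n - Suc k'))"
        using Suc e by (simp add: qpoch_Suc)
      have b: "qpoch q q (Suc k') = qpoch q q k' * (1 - q*q^k')" by (simp add: qpoch_Suc)
      have c: "qpoch q q (n - k') = qpoch q q (n - Suc k') * (1 - q*q^(n - Suc k'))"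
        using e by (simp add: qpoch_Suc)
      have d: "q*q^(n - Suc k') = q^(n-k')" using e by simp
      have "qbin q (Suc n) k * qpoch q q k * qpoch q q (Suc n - k)
         = qbin q n (Suc k') * qpoch q q (Suc k') * qpoch q q (n - Suc k') * (1 - q^(n-k'))
           + q^(n-k') * (qbin q n k' * qpoch q q k' * (qpoch q q (n - Suc k') * (1 - q^(n-k')))) * (1 - q*q^k')"
        unfolding r Suc(1) b diff_Suc_Suc c d by (simp add: algebra_simps)
      also have "\<dots> = qpoch q q n * (1 - q^(n-k') + q^(n-k') - q^(n-k') * (q*q^k'))"
        unfolding h1 h2[unfolded c d] by (simp add: algebra_simps)
      also have "q^(n-k') * (q*q^k') = q * q ^ n"
        using lt by (simp flip: power_add power_Suc)
      finally show ?thesis by (simp add: qpoch_Suc algebra_simps)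
    qed
  qed
qed

definition T :: "complex \<Rightarrow> nat \<Rightarrow> complex \<Rightarrow> nat \<Rightarrow> complex" where
  "T q n z r = qbin q n r * z^r * q^(r^2) * qpoch (z*q^(r+1)) q (n-r)"

lemma T0: "T q (Suc n) z 0 = T q n z 0 * (1 - z*q^(Suc n))"
  by (simp add: T_def qpoch_Suc algebra_simps)

lemma TS: "T q (Suc n) z (Suc s) = T q n z (Suc s) * (1 - z*q^(Suc n)) + z*q^(Suc n) * T q n (z*q) s"
proof (cases "s < n")
  case True
  have e: "n - s = Suc (n - Suc s)" using True by simp
  have p: "z * q ^ (Suc s + 1) * q^(n - Suc s) = z*q^(Suc n)"
  proof -
    have "Suc s + 1 + (n - Suc s) = Suc n" using True by simp
    then show ?thesis by (metis mult.assoc power_add)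
  qed
  have p2: "q^(n-s) * q^((Suc s)^2) = q^(Suc n) * q^s * q^(s^2)"
  proof -
    have "n - s + (Suc s)^2 = Suc n + s + s^2" using True by (simp add: power2_eq_square)
    then show ?thesis by (metis power_add)
  qed
  have P1: "qpoch (z * q ^ (Suc s + 1)) q (n - s) = qpoch (z * q ^ (Suc s + 1)) q (n - Suc s) * (1 - z*q^(Suc n))"
    unfolding e qpoch_Suc p ..
  have zq: "z * q * q^(s+1) = z * q ^ (Suc s + 1)" by (simp add: mult_ac)
  have "T q (Suc n) z (Suc s) = qbin q n (Suc s) * z ^ Suc s * q ^ (Suc s)^2 * qpoch (z * q ^ (Suc s + 1)) q (n - s)
     + (q^(n-s) * q ^ (Suc s)^2) * qbin q n s * z ^ Suc s * qpoch (z * q ^ (Suc s + 1)) q (n - s)"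
    unfolding T_def by (simp add: algebra_simps)
  also have "\<dots> = T q n z (Suc s) * (1 - z*q^(Suc n)) + z*q^(Suc n) * T q n (z*q) s"
    unfolding p2 P1 T_def zq by (simp add: algebra_simps power_mult_distrib)
  finally show ?thesis .
next
  case False
  then have z: "qbin q n (Suc s) = 0" by (simp add: qbin_gt)
  show ?thesis
  proof (cases "s = n")
    case True
    have p2: "q ^ (Suc n)^2 = q * (q ^ n * (q ^ n * q ^ n^2))"
    proof -
      have "(Suc n)^2 = 1 + (n + (n + n^2))" by (simp add: power2_eq_square)
      then show ?thesis by (simp only: power_add power_one_right)
    qed
    show ?thesis using True z unfolding T_def by (simp add: p2 algebra_simps power_mult_distrib)
  next
    case False
    then have "n < s" using \<open>\<not> s < n\<close> by simp
    then show ?thesis using z by (simp add: T_def qbin_gt)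
  qed
qed

lemma Tsum: "(\<Sum>r=0..n. T q n z r) = 1"
proof (induction n arbitrary: z)
  case 0 then show ?case by (simp add: T_def)
next
  case (Suc n)
  have "(\<Sum>r=0..Suc n. T q (Suc n) z r) = T q (Suc n) z 0 + (\<Sum>s=0..n. T q (Suc n) z (Suc s))"
    by (simp only: sum.atLeast0_atMost_Suc_shift o_def)
  also have "\<dots> = (1 - z*q^(Suc n)) * (T q n z 0 + (\<Sum>s=0..n. T q n z (Suc s)))
      + z*q^(Suc n) * (\<Sum>s=0..n. T q n (z*q) s)"
    unfolding T0 TS sum.distrib sum_distrib_left sum_distrib_right by (simp add: algebra_simps sum_subtractf sum_distrib_left)
  also have "T q n z 0 + (\<Sum>s=0..n. T q n z (Suc s)) = (\<Sum>r=0..Suc n. T q n z r)"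
    by (simp only: sum.atLeast0_atMost_Suc_shift o_def)
  also have "\<dots> = 1" using Suc.IH[of z] by (simp add: T_def qbin_gt)
  finally show ?case using Suc.IH[of "z*q"] by simp
qed

lemma qpoch_nz_le: "qpoch a q n \<noteq> 0 \<Longrightarrow> k \<le> n \<Longrightarrow> qpoch a q k \<noteq> 0"
  by (metis le_add_diff_inverse mult_eq_0_iff qpoch_add)

lemma qbin_shift:
  assumes "qpoch q q (Suc m) \<noteq> 0" "s \<le> m"
  shows "qbin q (Suc m) (Suc s) * (1 - q^(Suc s)) = (1 - q^(Suc m)) * qbin q m s"
proof -
  have nz: "qpoch q q s * qpoch q q (m-s) \<noteq> 0"
    using qpoch_nz_le[OF assms(1)] assms(2) by simp
  have f1: "qbin q (Suc m) (Suc s) * qpoch q q (Suc s) * qpoch q q (m - s) = qpoch q q (Suc m)"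
    using qbin_fact[of "Suc s" "Suc m" q] assms(2) by simp
  have f2: "qbin q m s * qpoch q q s * qpoch q q (m - s) = qpoch q q m"
    using qbin_fact[of s m q] assms(2) by simp
  have "(qbin q (Suc m) (Suc s) * (1 - q^(Suc s))) * (qpoch q q s * qpoch q q (m-s))
      = ((1 - q^(Suc m)) * qbin q m s) * (qpoch q q s * qpoch q q (m-s))"
  proof -
    have "(qbin q (Suc m) (Suc s) * (1 - q^(Suc s))) * (qpoch q q s * qpoch q q (m-s)) = qpoch q q (Suc m)"
      using f1 by (simp add: qpoch_Suc algebra_simps)
    also have "\<dots> = ((1 - q^(Suc m)) * qbin q m s) * (qpoch q q s * qpoch q q (m-s))"
      using f2 by (simp add: qpoch_Suc algebra_simps)
    finally show ?thesis .
  qed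
  then show ?thesis using nz by simp
qed

lemma Usum:
  assumes "qpoch q q n \<noteq> 0" "q \<noteq> 0"
  shows "(\<Sum>r=0..n. qbin q n r * (1-q^r) * (z/q)^r * q^(r^2) * qpoch (z*q^(r+1)) q (n-r)) = (1 - q^n) * z"
proof (cases n)
  case 0 then show ?thesis by simp
next
  case (Suc m)
  have "(\<Sum>r=0..n. qbin q n r * (1-q^r) * (z/q)^r * q^(r^2) * qpoch (z*q^(r+1)) q (n-r))
      = (\<Sum>s=0..m. qbin q (Suc m) (Suc s) * (1-q^(Suc s)) * (z/q)^(Suc s) * q^((Suc s)^2) * qpoch (z*q^(Suc s+1)) q (m-s))"
    unfolding Suc by (simp only: sum.atLeast0_atMost_Suc_shift o_def) simp
  also have "\<dots> = (\<Sum>s=0..m. (1 - q^(Suc m)) * z * T q m (z*q) s)"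
  proof (rule sum.cong[OF refl])
    fix s assume "s \<in> {0..m}"
    then have sm: "s \<le> m" by simp
    have e: "(z/q)^(Suc s) * q^((Suc s)^2) = z * (z*q)^s * q^(s^2)"
    proof -
      have "(Suc s)^2 = Suc s + (s + s^2)" by (simp add: power2_eq_square)
      then have "q^((Suc s)^2) = q^(Suc s) * (q^s * q^(s^2))" by (simp only: power_add)
      then show ?thesis using assms(2) by (simp add: power_divide power_mult_distrib field_simps)
    qed
    have e2: "z*q^(Suc s+1) = z*q*q^(s+1)" by (simp add: mult_ac)
    show "qbin q (Suc m) (Suc s) * (1-q^(Suc s)) * (z/q)^(Suc s) * q^((Suc s)^2) * qpoch (z*q^(Suc s+1)) q (m-s)
        = (1 - q^(Suc m)) * z * T q m (z*q) s"
    proof -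
      have "qbin q (Suc m) (Suc s) * (1-q^(Suc s)) * (z/q)^(Suc s) * q^((Suc s)^2) * qpoch (z*q^(Suc s+1)) q (m-s)
         = (qbin q (Suc m) (Suc s) * (1-q^(Suc s))) * ((z/q)^(Suc s) * q^((Suc s)^2)) * qpoch (z*q*q^(s+1)) q (m-s)"
        unfolding e2 by (simp only: mult_ac)
      also have "\<dots> = (1 - q^(Suc m)) * qbin q m s * (z * (z*q)^s * q^(s^2)) * qpoch (z*q*q^(s+1)) q (m-s)"
        unfolding e qbin_shift[OF assms(1)[unfolded Suc] sm] ..
      finally show ?thesis unfolding T_def by (simp only: mult_ac)
    qed
  qed
  also have "\<dots> = (1 - q^n) * z" using Tsum[of q m "z*q"] Suc by (simp flip: sum_distrib_left)
  finally show ?thesis .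
qed

theorem lemma3p3:
  fixes n :: nat and u z q :: complex
  assumes "q \<noteq> 0"
    and "\<And>j. 1 \<le> j \<Longrightarrow> j \<le> n \<Longrightarrow> q ^ j \<noteq> 1"
    and "\<And>j. j \<le> n \<Longrightarrow> z * q ^ j \<noteq> 1"
  shows "(\<Sum>r=0..n. Kc n r z q * Phi r 1 z q) = Phi n 1 z q \<and>
         (\<Sum>r=0..n. Kc n r (z / q) q * Phi r u z q) = Phi n (u * z) z q"
proof -
  have qn: "qpoch q q n \<noteq> 0"
    unfolding qpoch_def using assms(2)[of "Suc _"] by (simp add: prod_zero_iff)
  have zn: "qpoch z q (n+1) \<noteq> 0"
    unfolding qpoch_def using assms(3) by (simp add: prod_zero_iff)
  define D where "D = qpoch q q n * qpoch z q (n+1)"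
  have Dnz: "D \<noteq> 0" using qn zn D_def by simp
  have key: "Kc n r w q * (N / (qpoch q q r * qpoch z q (r + 1)))
      = (qbin q n r * w^r * q^(r^2) * qpoch (z*q^(r+1)) q (n-r)) * N / D"
    if "r \<le> n" for r w N
  proof -
    have f: "qbin q n r * qpoch q q r * qpoch q q (n-r) = qpoch q q n" using qbin_fact that by blast
    have g: "qpoch z q (r+1) * qpoch (z*q^(r+1)) q (n-r) = qpoch z q (n+1)"
      using qpoch_add[of z q "r+1" "n-r"] that by simp
    have nz1: "qbin q n r * qpoch q q r * qpoch q q (n-r) \<noteq> 0" using f qn by simp
    have nz2: "qpoch z q (r+1) * qpoch (z*q^(r+1)) q (n-r) \<noteq> 0" using g zn by simp
    have K: "Kc n r w q = w^r * q^(r^2) / qpoch q q (n-r)"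
      using that by (simp add: Kc_def inv_qfact_def nat_diff_distrib)
    show ?thesis unfolding K D_def f[symmetric] g[symmetric] using nz1 nz2
      by (simp add: field_simps)
  qed
  have part1: "(\<Sum>r=0..n. Kc n r z q * Phi r 1 z q) = Phi n 1 z q"
  proof -
    have "(\<Sum>r=0..n. Kc n r z q * Phi r 1 z q) = (\<Sum>r=0..n. T q n z r * (1 - z) / D)"
    proof (rule sum.cong[OF refl])
      fix r assume "r \<in> {0..n}"
      then show "Kc n r z q * Phi r 1 z q = T q n z r * (1 - z) / D"
        unfolding Phi_def using key[of r z "1 - z"] by (simp add: T_def)
    qed
    also have "\<dots> = (1 - z) / D" using Tsum[of q n z] by (simp flip: sum_divide_distrib sum_distrib_right)
    finally show ?thesis by (simp add: Phi_def D_def)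
  qed
  have part2: "(\<Sum>r=0..n. Kc n r (z / q) q * Phi r u z q) = Phi n (u * z) z q"
  proof -
    have "(\<Sum>r=0..n. Kc n r (z / q) q * Phi r u z q) =
       (\<Sum>r=0..n. ((1 - z*q^n) * T q n (z/q) r
          - u * z * (qbin q n r * (1-q^r) * (z/q)^r * q^(r^2) * qpoch (z*q^(r+1)) q (n-r))) / D)"
    proof (rule sum.cong[OF refl])
      fix r assume "r \<in> {0..n}"
      then have rn: "r \<le> n" by simp
      have zz: "z / q * q ^ (r + 1) = z * q^r" using assms(1) by (simp add: field_simps)
      have p: "(1 - z*q^r) * qpoch (z*q^(r+1)) q (n-r) = qpoch (z*q^r) q (n-r) * (1 - z*q^n)"
      proof -
        have "qpoch (z*q^r) q (1 + (n-r)) = (1 - z*q^r) * qpoch (z*q^(r+1)) q (n-r)"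
          using qpoch_add[of "z*q^r" q 1 "n-r"] by (simp add: qpoch_Suc mult_ac)
        moreover have "qpoch (z*q^r) q ((n-r) + 1) = qpoch (z*q^r) q (n-r) * (1 - z*q^n)"
          using qpoch_add[of "z*q^r" q "n-r" 1] rn by (simp add: mult.assoc qpoch_def flip: power_add)
        ultimately show ?thesis by (simp add: add.commute)
      qed
      have N: "1 - u * z - (1 - u) * z * q ^ r = (1 - z*q^r) - u*z*(1-q^r)" by (simp add: algebra_simps)
      show "Kc n r (z / q) q * Phi r u z q = ((1 - z*q^n) * T q n (z/q) r
          - u * z * (qbin q n r * (1-q^r) * (z/q)^r * q^(r^2) * qpoch (z*q^(r+1)) q (n-r))) / D"
      proof -
        define c where "c = qbin q n r * (z/q)^r * q^(r^2)"
        define X where "X = qpoch (z*q^(r+1)) q (n-r)"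
        define Y where "Y = qpoch (z*q^r) q (n-r)"
        have pc: "c * X * (1 - z*q^r) = (1 - z*q^n) * (c * Y)"
          using arg_cong[OF p, of "(*) c"] unfolding X_def Y_def by (simp add: mult_ac)
        have "Kc n r (z / q) q * Phi r u z q = (c * X) * ((1 - z*q^r) - u*z*(1-q^r)) / D"
          unfolding Phi_def key[OF rn] N c_def X_def by simp
        also have "\<dots> = (c * X * (1 - z*q^r) - u*z*(c*(1-q^r)*X)) / D"
          by (simp add: algebra_simps)
        also have "\<dots> = ((1 - z*q^n) * (c * Y) - u*z*(c*(1-q^r)*X)) / D"
          unfolding pc ..
        finally show ?thesis unfolding c_def X_def Y_def T_def zz by (simp add: mult_ac)
      qed
    qed
    also have "\<dots> = ((1 - z*q^n) * (\<Sum>r=0..n. T q n (z/q) r)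
        - u * z * (\<Sum>r=0..n. qbin q n r * (1-q^r) * (z/q)^r * q^(r^2) * qpoch (z*q^(r+1)) q (n-r))) / D"
      by (simp add: sum_divide_distrib[symmetric] sum_subtractf sum_distrib_left)
    also have "\<dots> = ((1 - z*q^n) - u*z*((1 - q^n)*z)) / D"
      unfolding Tsum Usum[OF qn assms(1)] by simp
    finally show ?thesis by (simp add: Phi_def D_def algebra_simps)
  qed
  show ?thesis using part1 part2 by simp
qed

end
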